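(* Let $\mathcal{T}\in\mathbb{K}^{R\times R\times K}$ be slice mix invertible, and let $\{(\mathscr{L}_j,\mathbf{x}_j)\}_{j=1}^\ell$ be JGE pairs of $\mathcal{T}$ with $\mathscr{L}_1,\dots,\mathscr{L}_\ell$ pairwise distinct. Then $\{\mathbf{x}_j\}_{j=1}^\ell$ is linearly independent. Consequently, if $\mathcal{T}$ is simple and each of its JGE values has geometric multiplicity at least one, then the JGE vectors of $\mathcal{T}$ contain a basis of $\mathbb{K}^R$.
   Context: $\mathbb{K}$ denotes $\mathbb{R}$ or $\mathbb{C}$. For $\mathcal{T}\in\mathbb{K}^{R\times R\times K}$ with slices $\mathbf{T}_k=\mathcal{T}(:,:,k)$: slice mix invertible means some linear combination of the $\mathbf{T}_k$ is invertible. A nonzero $\mathbf{x}$ is a JGE vector if there are $\boldsymbol{\lambda}\in\mathbb{K}^K$ and nonzero $\mathbf{y}\in\mathbb{K}^R$ with $\mathbf{T}_\ell\mathbf{x}=\lambda_\ell\mathbf{y}$ for all $\ell$; then $\mathrm{span}(\boldsymbol{\lambda})$ is a JGE value and $(\mathrm{span}(\boldsymbol{\lambda}),\mathbf{x})$ a JGE pair. $p_{\mathcal{T}}(\boldsymbol{\gamma})=\det(\sum_k\gamma_k\mathbf{T}_k)$; the algebraic multiplicity of $\mathrm{span}(\boldsymbol{\lambda})$ is the largest $m$ with $(\sum_k\lambda_k\gamma_k)^m\mid p_{\mathcal{T}}$ (so JGE values are understood to include such $\mathrm{span}(\boldsymbol\lambda)$ with positive algebraic multiplicity); the geometric multiplicity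 is the dimension of the span of JGE vectors paired with it. $\mathcal{T}$ is simple if it is slice mix invertible and $p_{\mathcal{T}}$ is a product of $R$ pairwise non-proportional linear forms. *)

theory Defs
  imports "HOL-Analysis.Analysis"
begin

text \<open>A tensor in K^(R x R x K) is given by its K frontal slices
  T k :: 'a^'r^'r (k :: 'k).  R = CARD('r), K = CARD('k).
  The scalar field 'a is a real normed field, i.e. (up to isomorphism) R or C.\<close>

definition slice_mix :: "('k::finite \<Rightarrow> 'a::field^'r^'r) \<Rightarrow> 'a^'k \<Rightarrow> 'a^'r^'r" where
  "slice_mix T \<gamma> = (\<chi> i j. \<Sum>k\<in>UNIV. \<gamma>$k * T k $ i $ j)"

definition slice_mix_invertible :: "('k::finite \<Rightarrow> 'a::field^'r::finite^'r) \<Rightarrow> bool" where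
  "slice_mix_invertible T \<longleftrightarrow> (\<exists>\<gamma>. invertible (slice_mix T \<gamma>))"

definition jge_pair :: "('k::finite \<Rightarrow> 'a::field^'r::finite^'r) \<Rightarrow> ('a^'k) set \<Rightarrow> 'a^'r \<Rightarrow> bool" where
  "jge_pair T L x \<longleftrightarrow> x \<noteq> 0 \<and>
     (\<exists>lam y. y \<noteq> 0 \<and> L = vec.span {lam} \<and> (\<forall>l. T l *v x = lam$l *s y))"

definition jge_vector :: "('k::finite \<Rightarrow> 'a::field^'r::finite^'r) \<Rightarrow> 'a^'r \<Rightarrow> bool" where
  "jge_vector T x \<longleftrightarrow> (\<exists>L. jge_pair T L x)"

definition char_poly :: "('k::finite \<Rightarrow> 'a::field^'r::finite^'r) \<Rightarrow> 'a^'k \<Rightarrow> 'a" where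
  "char_poly T \<gamma> = det (slice_mix T \<gamma>)"

text \<open>polynomial functions in the K variables gamma_1..gamma_K (over an infinite
  field these are the same as polynomials)\<close>
definition poly_fun :: "('a::field^'k::finite \<Rightarrow> 'a) \<Rightarrow> bool" where
  "poly_fun f \<longleftrightarrow> (\<exists>(c :: ('k \<Rightarrow> nat) \<Rightarrow> 'a) E. finite E \<and>
      (\<forall>\<gamma>. f \<gamma> = (\<Sum>e\<in>E. c e * (\<Prod>k\<in>UNIV. (\<gamma>$k) ^ e k))))"

definition lin_form :: "'a::field^'k::finite \<Rightarrow> 'a^'k \<Rightarrow> 'a" where
  "lin_form lam \<gamma> = (\<Sum>k\<in>UNIV. lam$k * \<gamma>$k)"

definition alg_mult :: "('k::finite \<Rightarrow> 'a::field^'r::finite^'r) \<Rightarrow> 'a^'k \<Rightarrow> nat" where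
  "alg_mult T lam = (GREATEST m. \<exists>q. poly_fun q \<and>
      (\<forall>\<gamma>. char_poly T \<gamma> = (lin_form lam \<gamma>) ^ m * q \<gamma>))"

definition jge_value :: "('k::finite \<Rightarrow> 'a::field^'r::finite^'r) \<Rightarrow> ('a^'k) set \<Rightarrow> bool" where
  "jge_value T L \<longleftrightarrow> (\<exists>x. jge_pair T L x) \<or>
     (\<exists>lam. L = vec.span {lam} \<and> alg_mult T lam > 0)"

definition geom_mult :: "('k::finite \<Rightarrow> 'a::field^'r::finite^'r) \<Rightarrow> ('a^'k) set \<Rightarrow> nat" where
  "geom_mult T L = vec.dim {x. jge_pair T L x}"

definition simple_tensor :: "('k::finite \<Rightarrow> 'a::field^'r::finite^'r) \<Rightarrow> bool" where
  "simple_tensor T \<longleftrightarrow> slice_mix_invertible T \<and>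
     (\<exists>a :: 'r \<Rightarrow> 'a^'k.
        (\<forall>\<gamma>. char_poly T \<gamma> = (\<Prod>r\<in>UNIV. lin_form (a r) \<gamma>)) \<and>
        (\<forall>r s. r \<noteq> s \<longrightarrow> \<not> (\<exists>c. a r = c *s a s \<or> a s = c *s a r)))"

end

theory Submission
  imports Defs "HOL-Computational_Algebra.Polynomial"
begin
lemma mix_mult:
  "slice_mix T \<gamma> *v x = (\<Sum>k\<in>UNIV. \<gamma>$k *s (T k *v x))"
  unfolding vec_eq_iff
  by (auto simp: matrix_vector_mult_def slice_mix_def sum_distrib_left sum_distrib_right
      mult.assoc sum_component intro: sum.swap)

lemma eig_indep:
  fixes A :: "'k::finite \<Rightarrow> 'a::field^'r::finite^'r" and x :: "nat \<Rightarrow> 'a^'r"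
  assumes nz: "\<forall>j<n. x j \<noteq> 0"
    and ev: "\<forall>j<n. \<forall>l. A l *v x j = \<mu> j $ l *s x j"
    and di: "\<forall>i<n. \<forall>j<n. i \<noteq> j \<longrightarrow> \<mu> i \<noteq> \<mu> j"
  shows "\<forall>c. (\<Sum>j<n. c j *s x j) = 0 \<longrightarrow> (\<forall>j<n. c j = 0)"
  using assms
proof (induction n)
  case 0
  then show ?case by simp
next
  case (Suc n)
  show ?case
  proof (rule allI, rule impI)
    fix c assume s: "(\<Sum>j<Suc n. c j *s x j) = 0"
    have z: "(\<Sum>j<n. (c j * (\<mu> j $ l - \<mu> n $ l)) *s x j) = 0" for l
    proof -
      have "0 = A l *v (\<Sum>j<Suc n. c j *s x j) - \<mu> n $ l *s (\<Sum>j<Suc n. c j *s x j)"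
        using s by simp
      also have "\<dots> = (\<Sum>j<Suc n. (c j * (\<mu> j $ l - \<mu> n $ l)) *s x j)"
        using Suc.prems(2)
        by (simp add: vec.sum vec.scale_sum_right sum_subtractf[symmetric] algebra_simps
            vector_scalar_commute vec.scale_right_diff_distrib vec.scale_left_diff_distrib)
      also have "\<dots> = (\<Sum>j<n. (c j * (\<mu> j $ l - \<mu> n $ l)) *s x j)"
        by simp
      finally show ?thesis by simp
    qed
    have IH: "\<forall>c. (\<Sum>j<n. c j *s x j) = 0 \<longrightarrow> (\<forall>j<n. c j = 0)"
      using Suc.IH Suc.prems by auto
    have cz: "c j = 0" if "j < n" for j
    proof -
      have "\<mu> j \<noteq> \<mu> n" using Suc.prems(3) that by auto
      then obtain l where "\<mu> j $ l \<noteq> \<mu> n $ l" by (auto simp: vec_eq_iff)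
      moreover have "c j * (\<mu> j $ l - \<mu> n $ l) = 0"
        using IH[rule_format, OF z[of l]] that by blast
      ultimately show ?thesis by simp
    qed
    then have "(\<Sum>j<n. c j *s x j) = 0" by simp
    with s have "c n *s x n = 0" by simp
    then have "c n = 0" using Suc.prems(1) by simp
    with cz show "\<forall>j<Suc n. c j = 0" using less_Suc_eq by auto
  qed
qed

lemma span_scale_eq:
  fixes v :: "'a::field^'k::finite"
  assumes "c \<noteq> 0"
  shows "vec.span {c *s v} = vec.span {v}"
proof -
  have "range (\<lambda>k. k *s (c *s v)) = range (\<lambda>k. k *s v)"
  proof (rule set_eqI, rule iffI)
    fix w assume "w \<in> range (\<lambda>k. k *s (c *s v))"
    then obtain k where "w = k *s (c *s v)" by auto
    then have "w = (k * c) *s v" by simp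
    then show "w \<in> range (\<lambda>k. k *s v)" by blast
  next
    fix w assume "w \<in> range (\<lambda>k. k *s v)"
    then obtain k where "w = k *s v" by auto
    then have "w = (k / c) *s (c *s v)" using assms by simp
    then show "w \<in> range (\<lambda>k. k *s (c *s v))" by blast
  qed
  then show ?thesis by (simp add: vec.span_singleton)
qed

lemma part1:
  fixes T :: "'k::finite \<Rightarrow> 'a::field^'r::finite^'r" and n :: nat and x :: "nat \<Rightarrow> 'a^'r"
    and L :: "nat \<Rightarrow> ('a^'k) set"
  assumes "slice_mix_invertible T"
    and pairs: "\<forall>j<n. jge_pair T (L j) (x j)" and injL: "inj_on L {..<n}"
  shows "inj_on x {..<n} \<and> vec.independent (x ` {..<n})"
proof -
  obtain \<gamma> where inv: "invertible (slice_mix T \<gamma>)"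
    using assms(1) unfolding slice_mix_invertible_def by blast
  define M where "M = slice_mix T \<gamma>"
  obtain B where BM: "B ** M = mat 1" using inv unfolding M_def invertible_left_inverse by blast
  have ker: "M *v v = 0 \<Longrightarrow> v = 0" for v
    using matrix_left_invertible_ker BM by blast
  have "\<forall>j. \<exists>lam y. j < n \<longrightarrow> x j \<noteq> 0 \<and> y \<noteq> 0 \<and> L j = vec.span {lam} \<and> (\<forall>l. T l *v x j = lam$l *s y)"
    using pairs unfolding jge_pair_def by blast
  then obtain lam y where ly: "\<And>j. j < n \<Longrightarrow> x j \<noteq> 0 \<and> y j \<noteq> 0 \<and> L j = vec.span {lam j} \<and> (\<forall>l. T l *v x j = lam j $l *s y j)"
    by metis
  define c where "c j = (\<Sum>k\<in>UNIV. \<gamma>$k * lam j $ k)" for j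
  have Mx: "M *v x j = c j *s y j" if "j < n" for j
  proof -
    have "M *v x j = (\<Sum>k\<in>UNIV. \<gamma>$k *s (lam j $ k *s y j))"
      unfolding M_def mix_mult using ly[OF that] by simp
    also have "\<dots> = c j *s y j"
      unfolding c_def by (simp add: vec.scale_sum_left)
    finally show ?thesis .
  qed
  have cnz: "c j \<noteq> 0" if "j < n" for j
    using Mx[OF that] ker ly[OF that] by fastforce
  define \<mu> where "\<mu> j = (1 / c j) *s lam j" for j
  have lamc: "lam j = c j *s \<mu> j" if "j < n" for j
    using cnz[OF that] unfolding \<mu>_def by simp
  have Lmu: "L j = vec.span {\<mu> j}" if "j < n" for j
    using ly[OF that] lamc[OF that] span_scale_eq[OF cnz[OF that]] by simp
  define A where "A l = B ** T l" for l
  have ev: "\<forall>j<n. \<forall>l. A l *v x j = \<mu> j $ l *s x j"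
  proof (intro allI impI)
    fix j l assume j: "j < n"
    have "A l *v x j = B *v (T l *v x j)" unfolding A_def by (simp add: matrix_vector_mul_assoc)
    also have "\<dots> = B *v (lam j $ l *s y j)" using ly[OF j] by simp
    also have "\<dots> = B *v (\<mu> j $ l *s (M *v x j))"
      using Mx[OF j] lamc[OF j] by (simp add: mult.commute)
    also have "\<dots> = \<mu> j $ l *s x j"
      by (simp add: vector_scalar_commute matrix_vector_mul_assoc BM)
    finally show "A l *v x j = \<mu> j $ l *s x j" .
  qed
  have di: "\<forall>i<n. \<forall>j<n. i \<noteq> j \<longrightarrow> \<mu> i \<noteq> \<mu> j"
    using injL Lmu unfolding inj_on_def by (metis lessThan_iff)
  have nz: "\<forall>j<n. x j \<noteq> 0" using ly by blast
  have injx: "inj_on x {..<n}"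
  proof (rule inj_onI)
    fix i j assume i: "i \<in> {..<n}" and j: "j \<in> {..<n}" and e: "x i = x j"
    have "\<mu> i = \<mu> j"
    proof (rule ccontr)
      assume "\<mu> i \<noteq> \<mu> j"
      then obtain l where l: "\<mu> i $ l \<noteq> \<mu> j $ l" by (auto simp: vec_eq_iff)
      have "\<mu> i $ l *s x i = \<mu> j $ l *s x i" using ev i j e by (metis lessThan_iff)
      then have "(\<mu> i $ l - \<mu> j $ l) *s x i = 0" by (simp add: vec.scale_left_diff_distrib)
      then show False using l nz i by simp
    qed
    then show "i = j" using di i j by auto
  qed
  have ind: "\<forall>c. (\<Sum>j<n. c j *s x j) = 0 \<longrightarrow> (\<forall>j<n. c j = 0)"
    using eig_indep[of n x A \<mu>] nz ev di by blast
  have "vec.independent (x ` {..<n})"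
  proof (rule vec.independent_if_scalars_zero)
    show "finite (x ` {..<n})" by simp
  next
    fix f v assume s: "(\<Sum>v\<in>x ` {..<n}. f v *s v) = 0" and v: "v \<in> x ` {..<n}"
    have "(\<Sum>j<n. f (x j) *s x j) = 0" using s by (simp add: sum.reindex[OF injx])
    then show "f v = 0" using ind v by auto
  qed
  with injx show ?thesis by blast
qed

definition mon :: "('k \<Rightarrow> nat) \<Rightarrow> 'a::field^'k::finite \<Rightarrow> 'a" where
  "mon e \<gamma> = (\<Prod>k\<in>UNIV. (\<gamma>$k) ^ e k)"

lemma poly_fun_gen:
  fixes f :: "'a::field^'k::finite \<Rightarrow> 'a"
  assumes "finite S" and "\<And>\<gamma>. f \<gamma> = (\<Sum>s\<in>S. d s * mon (g s) \<gamma>)"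
  shows "poly_fun f"
proof -
  define c where "c e = (\<Sum>s\<in>{s\<in>S. g s = e}. d s)" for e
  have "f \<gamma> = (\<Sum>e\<in>g ` S. c e * (\<Prod>k\<in>UNIV. (\<gamma>$k) ^ e k))" for \<gamma>
  proof -
    have "(\<Sum>e\<in>g ` S. c e * mon e \<gamma>) = (\<Sum>e\<in>g ` S. \<Sum>s\<in>{s\<in>S. g s = e}. d s * mon (g s) \<gamma>)"
      unfolding c_def sum_distrib_right by (rule sum.cong) auto
    also have "\<dots> = (\<Sum>s\<in>S. d s * mon (g s) \<gamma>)"
      by (rule sum.group) (use assms in auto)
    finally show ?thesis using assms(2) by (simp add: mon_def)
  qed
  then show ?thesis unfolding poly_fun_def using assms(1) by blast
qed

lemma poly_fun_iff:
  "poly_fun f \<longleftrightarrow> (\<exists>c E. finite E \<and> (\<forall>\<gamma>. f \<gamma> = (\<Sum>e\<in>E. c e * mon e \<gamma>)))"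
  unfolding poly_fun_def mon_def ..

lemma mon_add: "mon (\<lambda>k. e1 k + e2 k) \<gamma> = mon e1 \<gamma> * mon e2 \<gamma>"
  unfolding mon_def by (simp add: power_add prod.distrib)

lemma poly_fun_mult:
  fixes f g :: "'a::field^'k::finite \<Rightarrow> 'a"
  assumes "poly_fun f" "poly_fun g"
  shows "poly_fun (\<lambda>\<gamma>. f \<gamma> * g \<gamma>)"
proof -
  obtain c1 E1 where 1: "finite E1" "\<And>\<gamma>. f \<gamma> = (\<Sum>e\<in>E1. c1 e * mon e \<gamma>)"
    using assms(1) unfolding poly_fun_iff by blast
  obtain c2 E2 where 2: "finite E2" "\<And>\<gamma>. g \<gamma> = (\<Sum>e\<in>E2. c2 e * mon e \<gamma>)"
    using assms(2) unfolding poly_fun_iff by blast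
  show ?thesis
  proof (rule poly_fun_gen[where S="E1 \<times> E2" and d="\<lambda>(e1,e2). c1 e1 * c2 e2"
        and g="\<lambda>(e1,e2). (\<lambda>k. e1 k + e2 k)"])
    show "finite (E1 \<times> E2)" using 1 2 by simp
  next
    fix \<gamma>
    have "f \<gamma> * g \<gamma> = (\<Sum>e1\<in>E1. \<Sum>e2\<in>E2. (c1 e1 * mon e1 \<gamma>) * (c2 e2 * mon e2 \<gamma>))"
      unfolding 1 2 by (rule sum_product)
    also have "\<dots> = (\<Sum>(e1,e2)\<in>E1 \<times> E2. (c1 e1 * mon e1 \<gamma>) * (c2 e2 * mon e2 \<gamma>))"
      by (rule sum.cartesian_product)
    also have "\<dots> = (\<Sum>s\<in>E1 \<times> E2. (case s of (e1, e2) \<Rightarrow> c1 e1 * c2 e2) *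
          mon (case s of (e1, e2) \<Rightarrow> \<lambda>k. e1 k + e2 k) \<gamma>)"
      by (rule sum.cong) (auto simp: mon_add algebra_simps)
    finally show "f \<gamma> * g \<gamma> = \<dots>" .
  qed
qed

lemma poly_fun_const: "poly_fun (\<lambda>\<gamma>::'a::field^'k::finite. a)"
  by (rule poly_fun_gen[where S="{0::nat}" and d="\<lambda>_. a" and g="\<lambda>_ _. 0"]) (auto simp: mon_def)

lemma poly_fun_lin: "poly_fun (lin_form (lam :: 'a::field^'k::finite))"
proof (rule poly_fun_gen[where S=UNIV and d="\<lambda>k. lam$k" and g="\<lambda>k j. if j = k then 1 else 0"])
  fix \<gamma> :: "'a^'k"
  have "mon (\<lambda>j. if j = k then 1 else 0) \<gamma> = \<gamma>$k" for k :: 'k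
  proof -
    have "mon (\<lambda>j. if j = k then 1 else 0) \<gamma> = (\<Prod>j\<in>UNIV. if j = k then \<gamma>$j else 1)"
      unfolding mon_def by (rule prod.cong) auto
    also have "\<dots> = \<gamma>$k" by (simp add: prod.delta)
    finally show ?thesis .
  qed
  then show "lin_form lam \<gamma> = (\<Sum>s\<in>UNIV. lam $ s * mon (\<lambda>j. if j = s then 1 else 0) \<gamma>)"
    unfolding lin_form_def by simp
qed simp

lemma poly_fun_prod:
  fixes f :: "'b \<Rightarrow> 'a::field^'k::finite \<Rightarrow> 'a"
  assumes "finite S" "\<And>s. s \<in> S \<Longrightarrow> poly_fun (f s)"
  shows "poly_fun (\<lambda>\<gamma>. \<Prod>s\<in>S. f s \<gamma>)"
  using assms
proof (induction S rule: finite_induct)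
  case empty then show ?case using poly_fun_const by simp
next
  case (insert s S)
  then show ?case using poly_fun_mult[of "f s" "\<lambda>\<gamma>. \<Prod>s\<in>S. f s \<gamma>"] by simp
qed

lemma poly_line:
  fixes q :: "'a::field^'k::finite \<Rightarrow> 'a"
  assumes "poly_fun q"
  shows "\<exists>p. \<forall>t. q (u + t *s v) = poly p t"
proof -
  obtain c E where E: "finite E" "\<And>\<gamma>. q \<gamma> = (\<Sum>e\<in>E. c e * mon e \<gamma>)"
    using assms unfolding poly_fun_iff by blast
  define p where "p = (\<Sum>e\<in>E. smult (c e) (\<Prod>k\<in>UNIV. [:u$k, v$k:] ^ e k))"
  have "q (u + t *s v) = poly p t" for t
    unfolding E p_def mon_def by (simp add: poly_sum poly_prod mult.commute)
  then show ?thesis by blast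
qed

lemma lin_form_line: "lin_form a (u + t *s v) = lin_form a u + t * lin_form a v"
  unfolding lin_form_def by (simp add: algebra_simps sum.distrib sum_distrib_left)

lemma mult_bound:
  fixes T :: "'k::finite \<Rightarrow> 'a::real_normed_field^'r::finite^'r" and a :: "'r \<Rightarrow> 'a^'k"
  assumes cp: "\<forall>\<gamma>. char_poly T \<gamma> = (\<Prod>r\<in>UNIV. lin_form (a r) \<gamma>)"
    and u: "char_poly T u \<noteq> 0"
    and lam: "lam \<noteq> 0" and q: "poly_fun q"
    and eq: "\<forall>\<gamma>. char_poly T \<gamma> = lin_form lam \<gamma> ^ m * q \<gamma>"
  shows "m \<le> CARD('r)"
proof -
  obtain k where k: "lam$k \<noteq> 0" using lam by (auto simp: vec_eq_iff)
  define v where "v = (axis k 1 :: 'a^'k)"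
  have lv: "lin_form lam v = lam$k"
  proof -
    have "lin_form lam v = (\<Sum>j\<in>UNIV. if j = k then lam$j else 0)"
      unfolding lin_form_def v_def axis_def by (rule sum.cong) auto
    then show ?thesis by simp
  qed
  obtain p where p: "\<forall>t. q (u + t *s v) = poly p t" using poly_line[OF q] by blast
  define P where "P = (\<Prod>r\<in>UNIV. [:lin_form (a r) u, lin_form (a r) v:])"
  define Q where "Q = [:lin_form lam u, lin_form lam v:] ^ m"
  have "poly P t = poly (Q * p) t" for t
  proof -
    have "poly P t = char_poly T (u + t *s v)"
      unfolding P_def by (simp add: cp poly_prod lin_form_line mult.commute)
    also have "\<dots> = poly Q t * poly p t"
      unfolding Q_def using p by (simp add: eq lin_form_line mult.commute)
    finally show ?thesis by simp
  qed
  then have PQ: "P = Q * p" using poly_eq_poly_eq_iff by blast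
  have "poly P 0 = char_poly T u"
    unfolding P_def by (simp add: cp poly_prod)
  then have P0: "P \<noteq> 0" using u by auto
  then have Q0: "Q \<noteq> 0" and p0: "p \<noteq> 0" using PQ by auto
  have d1: "degree [:lin_form lam u, lin_form lam v:] = 1" using lv k by simp
  then have "degree Q = m" unfolding Q_def by (subst degree_power_eq) auto
  then have "degree P \<ge> m" using PQ degree_mult_eq[OF Q0 p0] by simp
  moreover have "degree P \<le> CARD('r)"
  proof -
    have "degree P \<le> sum (degree \<circ> (\<lambda>r. [:lin_form (a r) u, lin_form (a r) v:])) UNIV"
      unfolding P_def by (rule degree_prod_sum_le) simp
    also have "\<dots> \<le> sum (\<lambda>r. 1) (UNIV :: 'r set)"
      by (rule sum_mono) auto
    finally show ?thesis by simp
  qed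
  ultimately show ?thesis by simp
qed

theorem lemma3p2:
  fixes T :: "'k::finite \<Rightarrow> 'a::real_normed_field^'r::finite^'r"
  assumes "slice_mix_invertible T"
  shows "(\<forall>(n::nat) (L :: nat \<Rightarrow> ('a^'k) set) (x :: nat \<Rightarrow> 'a^'r).
            (\<forall>j<n. jge_pair T (L j) (x j)) \<and> inj_on L {..<n} \<longrightarrow>
            inj_on x {..<n} \<and> vec.independent (x ` {..<n}))
       \<and> (simple_tensor T \<and> (\<forall>L. jge_value T L \<longrightarrow> geom_mult T L \<ge> 1) \<longrightarrow>
            (\<exists>B. B \<subseteq> {x. jge_vector T x} \<and> vec.independent B \<and> vec.span B = UNIV))"
proof (rule conjI)
  show "\<forall>(n::nat) (L :: nat \<Rightarrow> ('a^'k) set) (x :: nat \<Rightarrow> 'a^'r).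
            (\<forall>j<n. jge_pair T (L j) (x j)) \<and> inj_on L {..<n} \<longrightarrow>
            inj_on x {..<n} \<and> vec.independent (x ` {..<n})"
    using part1[OF assms] by blast
next
  show "simple_tensor T \<and> (\<forall>L. jge_value T L \<longrightarrow> geom_mult T L \<ge> 1) \<longrightarrow>
            (\<exists>B. B \<subseteq> {x. jge_vector T x} \<and> vec.independent B \<and> vec.span B = UNIV)"
  proof
  assume H: "simple_tensor T \<and> (\<forall>L. jge_value T L \<longrightarrow> geom_mult T L \<ge> 1)"
  then obtain a :: "'r \<Rightarrow> 'a^'k" where
    cp: "\<forall>\<gamma>. char_poly T \<gamma> = (\<Prod>r\<in>UNIV. lin_form (a r) \<gamma>)" and
    np: "\<forall>r s. r \<noteq> s \<longrightarrow> \<not> (\<exists>c. a r = c *s a s \<or> a s = c *s a r)"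
    unfolding simple_tensor_def by blast
  obtain u where inv: "invertible (slice_mix T u)"
    using assms unfolding slice_mix_invertible_def by blast
  then have u: "char_poly T u \<noteq> 0" unfolding char_poly_def by (simp add: invertible_det_nz)
  have anz: "a r \<noteq> 0" for r
  proof
    assume "a r = 0"
    then have "lin_form (a r) u = 0" unfolding lin_form_def by simp
    then have "char_poly T u = 0" using cp by (simp add: prod_zero_iff) blast
    with u show False by simp
  qed
  have am: "alg_mult T (a r) \<ge> 1" for r
  proof -
    let ?P = "\<lambda>m. \<exists>q. poly_fun q \<and> (\<forall>\<gamma>. char_poly T \<gamma> = (lin_form (a r) \<gamma>) ^ m * q \<gamma>)"
    have "?P 1"
    proof (intro exI conjI allI)
      show "poly_fun (\<lambda>\<gamma>. \<Prod>s\<in>UNIV - {r}. lin_form (a s) \<gamma>)"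
        by (rule poly_fun_prod) (auto intro: poly_fun_lin)
      fix \<gamma>
      show "char_poly T \<gamma> = lin_form (a r) \<gamma> ^ 1 * (\<Prod>s\<in>UNIV - {r}. lin_form (a s) \<gamma>)"
        using cp prod.remove[of "UNIV :: 'r set" r "\<lambda>s. lin_form (a s) \<gamma>"] by simp
    qed
    moreover have "\<And>y. ?P y \<Longrightarrow> y \<le> CARD('r)"
      using mult_bound[OF cp u anz] by blast
    ultimately show ?thesis unfolding alg_mult_def by (rule Greatest_le_nat)
  qed
  have "\<exists>X. jge_pair T (vec.span {a r}) X" for r
  proof -
    have "jge_value T (vec.span {a r})" unfolding jge_value_def using am[of r] by auto
    then have "geom_mult T (vec.span {a r}) \<ge> 1" using H by blast
    then have "{x. jge_pair T (vec.span {a r}) x} \<noteq> {}"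
      unfolding geom_mult_def by (metis vec.dim_empty not_one_le_zero)
    then show ?thesis by blast
  qed
  then obtain X where X: "\<And>r. jge_pair T (vec.span {a r}) (X r)" by metis
  define n where "n = CARD('r)"
  obtain h where h: "bij_betw h {0..<n} (UNIV :: 'r set)"
    using ex_bij_betw_nat_finite[of "UNIV :: 'r set"] unfolding n_def by auto
  have injL: "inj_on (\<lambda>j. vec.span {a (h j)}) {..<n}"
  proof (rule inj_onI)
    fix i j assume i: "i \<in> {..<n}" and j: "j \<in> {..<n}"
      and e: "vec.span {a (h i)} = vec.span {a (h j)}"
    have "a (h i) \<in> vec.span {a (h j)}" using e vec.span_base[of "a (h i)" "{a (h i)}"] by auto
    then obtain c where "a (h i) = c *s a (h j)" unfolding vec.span_singleton by auto
    then have "h i = h j" using np by blast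
    then show "i = j" using h i j unfolding bij_betw_def inj_on_def by auto
  qed
  have pr: "\<forall>j<n. jge_pair T ((\<lambda>j. vec.span {a (h j)}) j) ((\<lambda>j. X (h j)) j)"
    using X by simp
  from part1[OF assms pr injL]
  have ix: "inj_on (\<lambda>j. X (h j)) {..<n}" and ind: "vec.independent ((\<lambda>j. X (h j)) ` {..<n})"
    by auto
  define B where "B = (\<lambda>j. X (h j)) ` {..<n}"
  have cB: "card B = vec.dim (UNIV :: ('a^'r) set)"
    unfolding B_def using card_image[OF ix] vec_dim_card[where 'n='r and 'a='a] by (simp add: n_def)
  have "vec.span B = UNIV"
    using vec.card_eq_dim[of B UNIV] cB ind unfolding B_def by auto
  moreover have "B \<subseteq> {x. jge_vector T x}"
    unfolding B_def jge_vector_def using X by blast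
  ultimately show "\<exists>B. B \<subseteq> {x. jge_vector T x} \<and> vec.independent B \<and> vec.span B = UNIV"
    using ind unfolding B_def by blast
  qed
qed

end
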